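(* Let $\Gamma=(G,\sigma)$ be a signed graph with $G=(V,E)$, $|V|=n$, and let $\alpha$ be the cardinality of a maximum independent set of $G$. Then for every $p>1$, $$\lambda_\alpha^{(p)}\le\max_{1\le i\le n}\frac{\sum_{j\sim i}w_{ij}+\kappa_i}{\mu_i}.$$
   Context: $G=(V,E)$ is a finite undirected graph without self-loops, $V=\{1,\dots,n\}$, $i\sim j$ means $\{i,j\}\in E$. A signed graph $\Gamma=(G,\sigma)$ has signature $\sigma:E\to\{\pm1\}$, edge weight $w:E\to(0,\infty)$, vertex measure $\mu:V\to(0,\infty)$, potential $\kappa:V\to\mathbb R$. For $p\ge1$ and nonzero $f$, $\mathcal R_p^\sigma(f)=\frac{\sum_{\{i,j\}\in E}w_{ij}|f(i)-\sigma_{ij}f(j)|^p+\sum_i\kappa_i|f(i)|^p}{\sum_i\mu_i|f(i)|^p}$; $\mathcal S_p=\{f:\sum_i\mu_i|f(i)|^p=1\}$; Krasnoselskii genus $\gamma(B)$ of closed symmetric $B\subset\mathbb R^n\setminus\{0\}$: least $k$ with an odd continuous map $B\to\mathbb R^k\setminus\{0\}$; $\mathcal F_k(\mathcal S_p)$ = closed symmetric $B\subset\mathcal S_p$ with $\gamma(B)\ge k$; $\lambda_k^{(p)}=\min_{B\in\mathcal F_k(\mathcal S_p)}\max_{f\in B}\mathcal R_p^\sigma(f)$. *)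

theory Defs
  imports "HOL-Analysis.Analysis" "HOL-Library.Extended_Nat"
begin

text \<open>Vertices are the elements of a finite type 'n (so V has CARD('n) = n elements);
  functions on V are vectors in real^'n. The graph is given by a symmetric irreflexive
  adjacency relation adj.\<close>

definition simple_graph :: "('n::finite \<Rightarrow> 'n \<Rightarrow> bool) \<Rightarrow> bool" where
  "simple_graph adj \<longleftrightarrow> (\<forall>i j. adj i j \<longrightarrow> adj j i) \<and> (\<forall>i. \<not> adj i i)"

definition independent_set :: "('n::finite \<Rightarrow> 'n \<Rightarrow> bool) \<Rightarrow> 'n set \<Rightarrow> bool" where
  "independent_set adj S \<longleftrightarrow> (\<forall>i\<in>S. \<forall>j\<in>S. \<not> adj i j)"

definition independence_number :: "('n::finite \<Rightarrow> 'n \<Rightarrow> bool) \<Rightarrow> nat" where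
  "independence_number adj = Max (card ` {S. independent_set adj S})"

text \<open>Sum over edges {i,j} of E: since |f i - s f j| = |f j - s f i| for s in {-1,1}
  and w, sg are symmetric, this equals half the sum over ordered adjacent pairs.\<close>
definition rayleigh_p ::
  "('n::finite \<Rightarrow> 'n \<Rightarrow> bool) \<Rightarrow> ('n \<Rightarrow> 'n \<Rightarrow> real) \<Rightarrow> ('n \<Rightarrow> 'n \<Rightarrow> real) \<Rightarrow>
   ('n \<Rightarrow> real) \<Rightarrow> ('n \<Rightarrow> real) \<Rightarrow> real \<Rightarrow> real^'n \<Rightarrow> real" where
  "rayleigh_p adj sg w mu kappa p f =
     ((1/2) * (\<Sum>i\<in>UNIV. \<Sum>j\<in>{j. adj i j}. w i j * \<bar>f$i - sg i j * f$j\<bar> powr p)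
       + (\<Sum>i\<in>UNIV. kappa i * \<bar>f$i\<bar> powr p))
     / (\<Sum>i\<in>UNIV. mu i * \<bar>f$i\<bar> powr p)"

definition p_sphere :: "('n::finite \<Rightarrow> real) \<Rightarrow> real \<Rightarrow> (real^'n) set" where
  "p_sphere mu p = {f. (\<Sum>i\<in>UNIV. mu i * \<bar>f$i\<bar> powr p) = 1}"

text \<open>An odd continuous map B \<rightarrow> R^k - {0} is given by its k real component functions,
  each continuous and odd on B, with no common zero on B.\<close>
definition odd_map_to_punctured :: "('a::real_normed_vector) set \<Rightarrow> nat \<Rightarrow> bool" where
  "odd_map_to_punctured B k \<longleftrightarrow>
     (\<exists>g :: nat \<Rightarrow> 'a \<Rightarrow> real.
        (\<forall>l<k. continuous_on B (g l) \<and> (\<forall>x\<in>B. g l (- x) = - g l x)) \<and>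
        (\<forall>x\<in>B. \<exists>l<k. g l x \<noteq> 0))"

definition kras_genus :: "('a::real_normed_vector) set \<Rightarrow> enat" where
  "kras_genus B = (if \<exists>k. odd_map_to_punctured B k
                   then enat (LEAST k. odd_map_to_punctured B k) else \<infinity>)"

definition genus_family :: "nat \<Rightarrow> (real^'n::finite) set \<Rightarrow> (real^'n) set set" where
  "genus_family k S = {B. B \<subseteq> S \<and> closed B \<and> uminus ` B = B \<and> kras_genus B \<ge> enat k}"

definition var_eigenvalue ::
  "('n::finite \<Rightarrow> 'n \<Rightarrow> bool) \<Rightarrow> ('n \<Rightarrow> 'n \<Rightarrow> real) \<Rightarrow> ('n \<Rightarrow> 'n \<Rightarrow> real) \<Rightarrow>
   ('n \<Rightarrow> real) \<Rightarrow> ('n \<Rightarrow> real) \<Rightarrow> real \<Rightarrow> nat \<Rightarrow> real" where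
  "var_eigenvalue adj sg w mu kappa p k =
     Inf ((\<lambda>B. Sup (rayleigh_p adj sg w mu kappa p ` B)) ` genus_family k (p_sphere mu p))"

end

theory Submission
  imports Defs "HOL-Homology.Homology"
begin

locale benum =
  fixes b :: "nat \<Rightarrow> 'a::euclidean_space"
  assumes bij: "bij_betw b {..<DIM('a)} Basis"
begin

lemma b_Basis: "i < DIM('a) \<Longrightarrow> b i \<in> Basis"
  using bij bij_betwE by blast

lemma b_inj: "i < DIM('a) \<Longrightarrow> j < DIM('a) \<Longrightarrow> b i = b j \<longleftrightarrow> i = j"
  using bij by (auto simp: bij_betw_def inj_on_def)

lemma b_inner: "i < DIM('a) \<Longrightarrow> j < DIM('a) \<Longrightarrow> b i \<bullet> b j = (if i = j then 1 else 0)"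
  by (simp add: inner_Basis[OF b_Basis b_Basis] b_inj)

lemma sum_Basis_reindex: "(\<Sum>u\<in>Basis. g u) = (\<Sum>i<DIM('a). g (b i))"
  using sum.reindex_bij_betw[OF bij, of g] by simp

lemma repr: "(\<Sum>i<DIM('a). (x \<bullet> b i) *\<^sub>R b i) = x"
  using euclidean_representation[of x] sum_Basis_reindex[of "\<lambda>u. (x \<bullet> u) *\<^sub>R u"] by simp

lemma inner_repr: "x \<bullet> y = (\<Sum>i<DIM('a). (x \<bullet> b i) * (y \<bullet> b i))"
  using euclidean_inner[of x y] sum_Basis_reindex[of "\<lambda>u. (x \<bullet> u) * (y \<bullet> u)"] by simp

lemma norm2_repr: "(norm x)\<^sup>2 = (\<Sum>i<DIM('a). (x \<bullet> b i)\<^sup>2)"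
proof -
  have "(norm x)\<^sup>2 = x \<bullet> x" by (simp add: power2_norm_eq_inner)
  also have "\<dots> = (\<Sum>i<DIM('a). (x \<bullet> b i)\<^sup>2)"
    by (subst inner_repr) (simp add: power2_eq_square)
  finally show ?thesis .
qed

definition E :: "'a \<Rightarrow> nat \<Rightarrow> real" where
  "E x = (\<lambda>i. if i < DIM('a) then x \<bullet> b i else 0)"

definition L :: "(nat \<Rightarrow> real) \<Rightarrow> 'a" where
  "L y = (\<Sum>i<DIM('a). y i *\<^sub>R b i)"

definition T :: "nat \<Rightarrow> 'a set" where
  "T m = {x. \<forall>i<DIM('a). m < i \<longrightarrow> x \<bullet> b i = 0}"

definition Sph :: "nat \<Rightarrow> 'a set" where
  "Sph m = sphere 0 1 \<inter> T m"

lemma L_inner: "j < DIM('a) \<Longrightarrow> L y \<bullet> b j = y j"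
proof -
  assume j: "j < DIM('a)"
  have "L y \<bullet> b j = (\<Sum>i<DIM('a). y i * (b i \<bullet> b j))"
    by (simp add: L_def inner_sum_left)
  also have "\<dots> = (\<Sum>i<DIM('a). if i = j then y j else 0)"
    by (rule sum.cong) (auto simp: b_inner j)
  also have "\<dots> = y j" using j by simp
  finally show ?thesis .
qed

lemma L_E [simp]: "L (E x) = x"
  unfolding L_def E_def using repr[of x] by simp

lemma E_L: "E (L y) = (\<lambda>i. if i < DIM('a) then y i else 0)"
  by (auto simp: E_def L_inner)

lemma linear_E: "E (x + y) = (\<lambda>i. E x i + E y i)" "E (c *\<^sub>R x) = (\<lambda>i. c * E x i)" "E (- x) = (\<lambda>i. - E x i)"
  by (auto simp: E_def fun_eq_iff inner_add_left inner_minus_left)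

lemma L_neg: "L (\<lambda>i. - y i) = - L y"
  unfolding L_def by (simp add: sum_negf)

lemma subspace_T: "subspace (T m)"
  unfolding T_def subspace_def by (auto simp: inner_add_left)

lemma T_eq:
  assumes m: "m < DIM('a)"
  shows "T m = {x. \<forall>u\<in>Basis. u \<notin> b ` {..m} \<longrightarrow> x \<bullet> u = 0}"
proof (rule Set.set_eqI, rule iffI)
  fix x assume x: "x \<in> T m"
  show "x \<in> {x. \<forall>u\<in>Basis. u \<notin> b ` {..m} \<longrightarrow> x \<bullet> u = 0}"
  proof (intro CollectI ballI impI)
  fix u assume u: "u \<in> Basis" "u \<notin> b ` {..m}"
  obtain i where i: "i < DIM('a)" "u = b i"
  proof -
    have "u \<in> b ` {..<DIM('a)}" using bij u(1) by (simp add: bij_betw_def)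
    then show ?thesis using that by auto
  qed
  have "m < i"
  proof (rule ccontr)
    assume "\<not> m < i"
    then have "u \<in> b ` {..m}" using i(2) by auto
    then show False using u(2) by blast
  qed
  then show "x \<bullet> u = 0" using x i by (auto simp: T_def)
  qed
next
  fix x assume "x \<in> {x. \<forall>u\<in>Basis. u \<notin> b ` {..m} \<longrightarrow> x \<bullet> u = 0}"
  then have x: "\<forall>u\<in>Basis. u \<notin> b ` {..m} \<longrightarrow> x \<bullet> u = 0" by simp
  show "x \<in> T m" unfolding T_def
  proof (intro CollectI allI impI)
    fix i assume i: "i < DIM('a)" "m < i"
    have "b i \<notin> b ` {..m}"
    proof
      assume "b i \<in> b ` {..m}"
      then obtain j where "j \<le> m" "b i = b j" by auto
      then show False using b_inj[of i j] i m by auto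
    qed
    then show "x \<bullet> b i = 0" using x b_Basis[OF i(1)] by auto
  qed
qed

lemma dim_T: "m < DIM('a) \<Longrightarrow> dim (T m) = Suc m"
proof -
  assume m: "m < DIM('a)"
  have sub: "b ` {..m} \<subseteq> Basis" using m b_Basis by auto
  have "dim (T m) = card (b ` {..m})"
    using dim_substandard[OF sub] T_eq[OF m] by simp
  also have "\<dots> = Suc m"
    using m by (subst card_image) (auto simp: inj_on_def b_inj)
  finally show ?thesis .
qed

lemma T_mono: "m \<le> m' \<Longrightarrow> T m \<subseteq> T m'"
  unfolding T_def by auto

lemma Sph_mono: "m \<le> m' \<Longrightarrow> Sph m \<subseteq> Sph m'"
  unfolding Sph_def using T_mono by auto

lemma neg_Sph: "x \<in> Sph m \<Longrightarrow> - x \<in> Sph m"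
  by (auto simp: Sph_def T_def)

lemma compact_Sph: "compact (Sph m)"
  unfolding Sph_def by (simp add: closed_subspace compact_Int_closed subspace_T)

lemma E_Sph: "m < DIM('a) \<Longrightarrow> x \<in> Sph m \<Longrightarrow> E x \<in> topspace (nsphere m)"
proof -
  assume m: "m < DIM('a)" and x: "x \<in> Sph m"
  have "(\<Sum>i\<le>m. (E x i)\<^sup>2) = (\<Sum>i<DIM('a). (x \<bullet> b i)\<^sup>2)"
  proof -
    have "(\<Sum>i<DIM('a). (x \<bullet> b i)\<^sup>2) = (\<Sum>i\<le>m. (x \<bullet> b i)\<^sup>2)"
      using x m by (intro sum.mono_neutral_right) (auto simp: Sph_def T_def)
    then show ?thesis using m by (simp add: E_def)
  qed
  also have "\<dots> = 1" using x by (simp add: Sph_def flip: norm2_repr)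
  finally show ?thesis
    using x by (auto simp: nsphere E_def Sph_def T_def)
qed

lemma L_Sph: "m < DIM('a) \<Longrightarrow> y \<in> topspace (nsphere m) \<Longrightarrow> L y \<in> Sph m"
proof -
  assume m: "m < DIM('a)" and y: "y \<in> topspace (nsphere m)"
  then have y1: "(\<Sum>i\<le>m. (y i)\<^sup>2) = 1" and y0: "\<And>i. m < i \<Longrightarrow> y i = 0"
    by (auto simp: nsphere)
  have "(norm (L y))\<^sup>2 = (\<Sum>i<DIM('a). (y i)\<^sup>2)"
    by (simp add: norm2_repr L_inner)
  also have "\<dots> = (\<Sum>i\<le>m. (y i)\<^sup>2)"
    using m y0 by (intro sum.mono_neutral_right) auto
  finally have "(norm (L y))\<^sup>2 = 1" using y1 by simp
  then have "norm (L y) = 1" using norm_ge_zero[of "L y"] by (auto simp: power2_eq_1_iff)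
  then show ?thesis using y0 by (auto simp: Sph_def T_def L_inner)
qed

lemma E_L_sph: "m < DIM('a) \<Longrightarrow> y \<in> topspace (nsphere m) \<Longrightarrow> E (L y) = y"
  by (auto simp: E_L nsphere fun_eq_iff)

lemma cont_E: "continuous_map (top_of_set S) (powertop_real UNIV) E"
  unfolding E_def continuous_map_componentwise_UNIV
proof
  fix i
  show "continuous_map (top_of_set S) euclideanreal (\<lambda>x. if i < DIM('a) then x \<bullet> b i else 0)"
    unfolding continuous_map_iff_continuous
    by (cases "i < DIM('a)") (simp_all add: continuous_on_inner continuous_on_id continuous_on_const)
qed

lemma cm_E: "m < DIM('a) \<Longrightarrow> continuous_map (top_of_set (Sph m)) (nsphere m) E"
  unfolding nsphere continuous_map_in_subtopology
  using cont_E E_Sph[of m] by (auto simp: nsphere)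

lemma cm_L: "m < DIM('a) \<Longrightarrow> continuous_map (nsphere m) (top_of_set (Sph m)) L"
proof -
  assume m: "m < DIM('a)"
  have "continuous_map euclidean (top_of_set (span (b ` {..<DIM('a)}))) L"
    unfolding L_def by (rule continuous_map_span_sum) auto
  then have "continuous_map euclidean euclidean L"
    using continuous_map_in_subtopology by blast
  then have "continuous_map (nsphere m) euclidean L"
    unfolding nsphere euclidean_product_topology[symmetric]
    by (rule continuous_map_from_subtopology)
  then show ?thesis
    using L_Sph[OF m] by (auto simp: continuous_map_in_subtopology)
qed

lemma homeo_EL: "m < DIM('a) \<Longrightarrow> homeomorphic_maps (top_of_set (Sph m)) (nsphere m) E L"
  unfolding homeomorphic_maps_def using cm_E cm_L E_L_sph by auto


definition dg :: "nat \<Rightarrow> ('a \<Rightarrow> 'a) \<Rightarrow> int" where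
  "dg m f = Brouwer_degree2 m (E \<circ> f \<circ> L)"

lemma cm_conj:
  assumes m: "m < DIM('a)" and cf: "continuous_on (Sph m) f" and fim: "f ` Sph m \<subseteq> Sph m"
  shows "continuous_map (nsphere m) (nsphere m) (E \<circ> f \<circ> L)"
proof -
  have "continuous_map (top_of_set (Sph m)) (top_of_set (Sph m)) f"
    using cf fim by (auto simp: continuous_map_subtopology_eu)
  then show ?thesis
    using cm_L[OF m] cm_E[OF m] by (intro continuous_map_compose) auto
qed

lemma dg_homotopic:
  assumes m: "m < DIM('a)" and h: "homotopic_with_canon (\<lambda>_. True) (Sph m) (Sph m) f g"
  shows "dg m f = dg m g"
proof -
  have "homotopic_with (\<lambda>_. True) (top_of_set (Sph m)) (nsphere m) (E \<circ> f) (E \<circ> g)"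
    by (rule homotopic_with_compose_continuous_map_left[OF h cm_E[OF m]]) auto
  then have "homotopic_with (\<lambda>_. True) (nsphere m) (nsphere m) (E \<circ> f \<circ> L) (E \<circ> g \<circ> L)"
    by (rule homotopic_with_compose_continuous_map_right[OF _ cm_L[OF m]]) auto
  then show ?thesis unfolding dg_def by (rule Brouwer_degree2_homotopic)
qed

lemma conj_compose: "E \<circ> (g \<circ> f) \<circ> L = (E \<circ> g \<circ> L) \<circ> (E \<circ> f \<circ> L)"
  by (simp add: fun_eq_iff)

lemma dg_compose:
  assumes m: "m < DIM('a)"
    and cf: "continuous_on (Sph m) f" and fim: "f ` Sph m \<subseteq> Sph m"
    and cg: "continuous_on (Sph m) g" and gim: "g ` Sph m \<subseteq> Sph m"
  shows "dg m (g \<circ> f) = dg m g * dg m f"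
  unfolding dg_def conj_compose
  by (rule Brouwer_degree2_compose[OF cm_conj[OF m cf fim] cm_conj[OF m cg gim]])

lemma dg_eq:
  assumes m: "m < DIM('a)" and "\<And>x. x \<in> Sph m \<Longrightarrow> f x = g x"
  shows "dg m f = dg m g"
  unfolding dg_def
  by (rule Brouwer_degree2_eq) (simp add: assms L_Sph[OF m])

lemma dg_id: 
  assumes m: "m < DIM('a)"
  shows "dg m id = 1"
proof -
  have "Brouwer_degree2 m (E \<circ> id \<circ> L) = Brouwer_degree2 m id"
    by (rule Brouwer_degree2_eq) (simp add: E_L_sph[OF m])
  then show ?thesis by (simp add: dg_def)
qed

lemma dg_nonsurj:
  assumes m: "m < DIM('a)"
    and cf: "continuous_on (Sph m) f" and fim: "f ` Sph m \<subseteq> Sph m"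
    and q: "q \<in> Sph m" "q \<notin> f ` Sph m"
  shows "dg m f = 0"
  unfolding dg_def
proof (rule Brouwer_degree2_nonsurjective[OF cm_conj[OF m cf fim]])
  show "(E \<circ> f \<circ> L) ` topspace (nsphere m) \<noteq> topspace (nsphere m)"
  proof
    assume eq: "(E \<circ> f \<circ> L) ` topspace (nsphere m) = topspace (nsphere m)"
    have "E q \<in> topspace (nsphere m)" using E_Sph[OF m q(1)] .
    then have "E q \<in> (E \<circ> f \<circ> L) ` topspace (nsphere m)" using eq by simp
    then obtain y where y: "y \<in> topspace (nsphere m)" "E q = E (f (L y))"
      by auto
    then have "L (E q) = L (E (f (L y)))" by simp
    then have "q = f (L y)" by simp
    then show False using q(2) L_Sph[OF m y(1)] by auto
  qed
qed

lemma dg_step: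
  assumes m0: "0 < m" and m: "m < DIM('a)"
    and cf: "continuous_on (Sph m) f" and fim: "f ` Sph m \<subseteq> Sph m"
    and odd: "\<And>x. x \<in> Sph m \<Longrightarrow> f (- x) = - f x"
    and fim1: "f ` Sph (m - 1) \<subseteq> Sph (m - 1)"
  shows "even (dg m f - dg (m - 1) f)"
proof -
  have m1: "m - 1 < DIM('a)" using m by simp
  have "even (Brouwer_degree2 m (E \<circ> f \<circ> L) - Brouwer_degree2 (m - Suc 0) (E \<circ> f \<circ> L))"
  proof (rule Borsuk_odd_mapping_degree_step[OF cm_conj[OF m cf fim]])
    fix u assume u: "u \<in> topspace (nsphere m)"
    have "L (\<lambda>i. - u i) = - L u" by (rule L_neg)
    then show "((E \<circ> f \<circ> L) \<circ> (\<lambda>x i. - x i)) u = ((\<lambda>x i. - x i) \<circ> (E \<circ> f \<circ> L)) u"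
      using odd[OF L_Sph[OF m u]] by (simp add: linear_E(3))
  next
    show "E \<circ> f \<circ> L \<in> topspace (nsphere (m - Suc 0)) \<rightarrow> topspace (nsphere (m - Suc 0))"
    proof
      fix u assume u: "u \<in> topspace (nsphere (m - Suc 0))"
      have m1': "m - Suc 0 < DIM('a)" using m by simp
      have fim1': "f ` Sph (m - Suc 0) \<subseteq> Sph (m - Suc 0)" using fim1 by simp
      have "L u \<in> Sph (m - Suc 0)" using L_Sph[OF m1' u] .
      then have "f (L u) \<in> Sph (m - Suc 0)" using fim1' by blast
      then show "(E \<circ> f \<circ> L) u \<in> topspace (nsphere (m - Suc 0))" using E_Sph[OF m1'] by simp
    qed
  qed
  then show ?thesis by (simp add: dg_def)
qed

end

lemma zero_in_segment_antipodal:
  fixes a c :: "'a::real_normed_vector"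
  assumes "norm a = 1" "norm c = 1" "0 \<in> closed_segment a c"
  shows "a = - c"
proof -
  obtain u where u: "0 \<le> u" "u \<le> 1" "(1 - u) *\<^sub>R a + u *\<^sub>R c = 0"
    using assms(3) by (auto simp: in_segment)
  then have eq: "(1 - u) *\<^sub>R a = - (u *\<^sub>R c)"
    by (simp add: eq_neg_iff_add_eq_0)
  then have "norm ((1 - u) *\<^sub>R a) = norm (u *\<^sub>R c)"
    by (metis norm_minus_cancel)
  then have "1 - u = u" using assms u by simp
  then have u2: "u = 1/2" by simp
  have h: "(1/2::real) *\<^sub>R a = (1/2::real) *\<^sub>R (- c)" using eq unfolding u2 by simp
  have "a = 2 *\<^sub>R ((1/2::real) *\<^sub>R a)" by simp
  also have "\<dots> = 2 *\<^sub>R ((1/2::real) *\<^sub>R (- c))" by (rule arg_cong[OF h])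
  also have "\<dots> = - c" by simp
  finally show ?thesis .
qed

lemma homotopic_nonantipodal:
  fixes f g :: "'b::topological_space \<Rightarrow> 'a::euclidean_space"
  assumes T: "subspace T" and cf: "continuous_on X f" and cg: "continuous_on X g"
    and fim: "f ` X \<subseteq> sphere 0 1 \<inter> T" and gim: "g ` X \<subseteq> sphere 0 1 \<inter> T"
    and na: "\<And>x. x \<in> X \<Longrightarrow> f x \<noteq> - g x"
  shows "homotopic_with_canon (\<lambda>_. True) X (sphere 0 1 \<inter> T) f g"
proof -
  have seg: "closed_segment (f x) (g x) \<subseteq> T - {0}" if x: "x \<in> X" for x
  proof -
    have "f x \<in> sphere 0 1 \<inter> T" "g x \<in> sphere 0 1 \<inter> T" using fim gim x by blast+
    then have fx: "f x \<in> T" "norm (f x) = 1" and gx: "g x \<in> T" "norm (g x) = 1"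
      by simp_all
    have "closed_segment (f x) (g x) \<subseteq> T"
      using fx gx T by (simp add: closed_segment_subset subspace_imp_convex)
    moreover have "0 \<notin> closed_segment (f x) (g x)"
      using zero_in_segment_antipodal[OF fx(2) gx(2)] na[OF x] by blast
    ultimately show ?thesis by blast
  qed
  have hom: "homotopic_with_canon (\<lambda>z. True) X (T - {0}) f g"
    by (rule homotopic_with_linear[OF cf cg seg])
  have conT0: "continuous_on (T - {0}) (\<lambda>y. inverse(norm y) *\<^sub>R y)"
    by (intro continuous_intros) auto
  have sub0T: "(\<lambda>y. inverse(norm y) *\<^sub>R y) \<in> (T - {0}) \<rightarrow> sphere 0 1 \<inter> T"
    using T by (auto simp: subspace_mul)
  have "homotopic_with_canon (\<lambda>_. True) X (sphere 0 1 \<inter> T)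
          ((\<lambda>y. inverse(norm y) *\<^sub>R y) \<circ> f) ((\<lambda>y. inverse(norm y) *\<^sub>R y) \<circ> g)"
    by (rule homotopic_with_compose_continuous_left[OF _ conT0 sub0T]) (use hom in simp)
  then show ?thesis
  proof (rule homotopic_with_eq)
    fix x assume "x \<in> topspace (top_of_set X)"
    then have x: "x \<in> X" by simp
    have "f x \<in> sphere 0 1 \<inter> T" "g x \<in> sphere 0 1 \<inter> T" using fim gim x by blast+
    then have "norm (f x) = 1" "norm (g x) = 1" by simp_all
    then show "f x = ((\<lambda>y. inverse (norm y) *\<^sub>R y) \<circ> f) x"
      and "g x = ((\<lambda>y. inverse (norm y) *\<^sub>R y) \<circ> g) x" by simp_all
  qed simp
qed

lemma odd_approx:
  fixes f :: "'a::euclidean_space \<Rightarrow> 'a"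
  assumes S: "subspace S" and T: "subspace T" and ST: "S \<subseteq> T" and dimST: "dim S < dim T"
    and cf: "continuous_on (sphere 0 1 \<inter> T) f" and fim: "f ` (sphere 0 1 \<inter> T) \<subseteq> sphere 0 1 \<inter> T"
    and odd: "\<And>x. x \<in> sphere 0 1 \<inter> T \<Longrightarrow> f (- x) = - f x"
  obtains g q where "continuous_on (sphere 0 1 \<inter> T) g" "g ` (sphere 0 1 \<inter> T) \<subseteq> sphere 0 1 \<inter> T"
    "\<And>x. x \<in> sphere 0 1 \<inter> T \<Longrightarrow> g (- x) = - g x"
    "\<And>x. x \<in> sphere 0 1 \<inter> T \<Longrightarrow> f x \<noteq> - g x"
    "q \<in> sphere 0 1 \<inter> T" "q \<notin> g ` (sphere 0 1 \<inter> S)"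
proof -
  let ?X = "sphere 0 1 \<inter> T"
  have cX: "compact ?X" by (simp add: T closed_subspace compact_Int_closed)
  have negX: "- x \<in> ?X" if "x \<in> ?X" for x
    using that T by (auto simp: subspace_neg)
  obtain P where pP: "polynomial_function P" and PT: "P ` ?X \<subseteq> T"
    and Pf: "\<And>x. x \<in> ?X \<Longrightarrow> norm (f x - P x) < 1/2"
    using Stone_Weierstrass_polynomial_function_subspace[OF cX cf _ T, of "1/2"] fim by auto
  define Q where "Q = (\<lambda>x. (1/2) *\<^sub>R (P x - P (- x)))"
  have pQ: "polynomial_function Q"
  proof -
    have "polynomial_function (P \<circ> (\<lambda>x. - x))"
      by (intro polynomial_function_compose pP polynomial_function_minus polynomial_function_id)
    then have "polynomial_function (\<lambda>x. P (- x))" by (simp add: o_def)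
    then show ?thesis unfolding Q_def
      by (intro polynomial_function_cmul polynomial_function_diff pP)
  qed
  have QT: "Q x \<in> T" if "x \<in> ?X" for x
  proof -
    have "P x \<in> T" "P (- x) \<in> T" using PT negX[OF that] that by auto
    then have "P x - P (- x) \<in> T" by (rule subspace_diff[OF T])
    then show ?thesis unfolding Q_def by (rule subspace_mul[OF T])
  qed
  have Qodd: "Q (- x) = - Q x" for x
    by (simp add: Q_def algebra_simps)
  have Qf: "norm (f x - Q x) < 1/2" if x: "x \<in> ?X" for x
  proof -
    have h2: "(1/2::real) *\<^sub>R f x + (1/2::real) *\<^sub>R f x = f x"
      by (metis scaleR_add_left field_sum_of_halves scaleR_one)
    have "f x - Q x = (1/2) *\<^sub>R ((f x - P x) - (f (- x) - P (- x)))"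
      using odd[OF x] h2 by (simp add: Q_def algebra_simps)
    also have "norm \<dots> \<le> (1/2) * (norm (f x - P x) + norm (f (- x) - P (- x)))"
      by (simp add: norm_triangle_ineq4)
    also have "\<dots> < (1/2) * (1/2 + 1/2)"
      using Pf[OF x] Pf[OF negX[OF x]] by simp
    finally show ?thesis by simp
  qed
  have fnorm: "norm (f x) = 1" if "x \<in> ?X" for x
  proof -
    have "f x \<in> ?X" using fim that by blast
    then show ?thesis by simp
  qed
  have Qnz: "Q x \<noteq> 0" if "x \<in> ?X" for x
  proof
    assume "Q x = 0"
    then show False using Qf[OF that] fnorm[OF that] by simp
  qed
  define g where "g = (\<lambda>x. inverse (norm (Q x)) *\<^sub>R Q x)"
  have diffQ: "Q differentiable_on UNIV"
    by (rule differentiable_on_polynomial_function[OF pQ])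
  have cQ: "continuous_on ?X Q"
    by (rule differentiable_imp_continuous_on[OF differentiable_on_subset[OF diffQ]]) simp
  have cg: "continuous_on ?X g"
    unfolding g_def using Qnz by (intro continuous_intros cQ) auto
  have gim: "g ` ?X \<subseteq> ?X"
  proof
    fix y assume "y \<in> g ` ?X"
    then obtain x where x: "x \<in> ?X" and y: "y = g x" by blast
    have "Q x \<in> T" "Q x \<noteq> 0" using QT[OF x] Qnz[OF x] by auto
    then have "g x \<in> T" "norm (g x) = 1" unfolding g_def by (auto intro: subspace_mul[OF T])
    then show "y \<in> ?X" using y by simp
  qed
  have godd: "g (- x) = - g x" for x
    by (simp add: g_def Qodd)
  have gclose: "norm (f x - g x) < 1" if x: "x \<in> ?X" for x
  proof -
    have "norm (Q x - g x) = \<bar>norm (Q x) - 1\<bar>"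
    proof -
      have "Q x - g x = (1 - inverse (norm (Q x))) *\<^sub>R Q x" by (simp add: g_def algebra_simps)
      then have "norm (Q x - g x) = \<bar>1 - inverse (norm (Q x))\<bar> * norm (Q x)" by simp
      also have "\<dots> = \<bar>(1 - inverse (norm (Q x))) * norm (Q x)\<bar>"
        by (simp add: abs_mult)
      also have "\<dots> = \<bar>norm (Q x) - 1\<bar>"
        using Qnz[OF x] by (simp add: algebra_simps)
      finally show ?thesis .
    qed
    also have "\<dots> = \<bar>norm (Q x) - norm (f x)\<bar>" using fnorm[OF x] by simp
    also have "\<dots> \<le> norm (f x - Q x)"
      by (metis norm_minus_commute norm_triangle_ineq3)
    finally have "norm (Q x - g x) < 1/2" using Qf[OF x] by simp
    then have "norm (f x - Q x) + norm (Q x - g x) < 1" using Qf[OF x] by simp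
    moreover have "norm (f x - g x) \<le> norm (f x - Q x) + norm (Q x - g x)"
      using norm_triangle_ineq[of "f x - Q x" "Q x - g x"] by simp
    ultimately show ?thesis by simp
  qed
  have gna: "f x \<noteq> - g x" if x: "x \<in> ?X" for x
  proof
    assume "f x = - g x"
    then have "f x - g x = - (2 *\<^sub>R g x)" by (simp add: algebra_simps scaleR_2)
    then have "norm (f x - g x) = 2 * norm (g x)" by simp
    moreover have "norm (g x) = 1"
    proof -
      have "g x \<in> ?X" using gim x by blast
      then show ?thesis by simp
    qed
    ultimately have "norm (f x - g x) = 2" by simp
    with gclose[OF x] show False by simp
  qed
  have SX: "sphere 0 1 \<inter> S \<subseteq> ?X" using ST by auto
  have diffg: "g differentiable_on sphere 0 1 \<inter> S"
  proof -
    have diffQS: "Q differentiable_on sphere 0 1 \<inter> S"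
      by (rule differentiable_on_subset[OF diffQ]) simp
    have gnz: "Q x \<noteq> 0" if "x \<in> sphere 0 1 \<inter> S" for x
      using Qnz SX that by blast
    show ?thesis
      unfolding g_def using gnz
      by (fastforce intro: derivative_intros diffQS differentiable_on_compose [OF diffQS])
  qed
  have "g ` (sphere 0 1 \<inter> S) \<noteq> sphere 0 1 \<inter> T"
    by (rule spheremap_lemma1[OF S T dimST ST diffg])
  moreover have "g ` (sphere 0 1 \<inter> S) \<subseteq> sphere 0 1 \<inter> T"
    using gim SX by blast
  ultimately obtain q where q: "q \<in> ?X" "q \<notin> g ` (sphere 0 1 \<inter> S)" by blast
  show ?thesis
    by (rule that[OF cg gim _ gna q]) (rule godd)
qed

definition refl :: "'a::real_inner \<Rightarrow> 'a \<Rightarrow> 'a" where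
  "refl v x = x - (2 * (x \<bullet> v) / (v \<bullet> v)) *\<^sub>R v"

lemma refl_inner_v: "v \<noteq> 0 \<Longrightarrow> refl v x \<bullet> v = - (x \<bullet> v)"
  by (simp add: refl_def inner_diff_left)

lemma refl_norm: "norm (refl v x) = norm x"
proof (cases "v = 0")
  case True then show ?thesis by (simp add: refl_def)
next
  case False
  define c where "c = (x \<bullet> v) / (v \<bullet> v)"
  have vv: "v \<bullet> v \<noteq> 0" using False by simp
  have cv: "c * (v \<bullet> v) = x \<bullet> v" using vv by (simp add: c_def)
  have r: "refl v x = x - (2 * c) *\<^sub>R v" by (simp add: refl_def c_def)
  have "refl v x \<bullet> refl v x = x \<bullet> x - 4 * c * (x \<bullet> v) + 4 * c * (c * (v \<bullet> v))"
    unfolding r by (simp add: inner_diff_left inner_diff_right inner_commute algebra_simps)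
  also have "\<dots> = x \<bullet> x" by (simp add: cv)
  finally show ?thesis by (simp add: norm_eq_sqrt_inner)
qed

lemma refl_invol: "refl v (refl v x) = x"
proof (cases "v = 0")
  case True then show ?thesis by (simp add: refl_def)
next
  case False
  have "refl v (refl v x) = refl v x + (2 * (x \<bullet> v) / (v \<bullet> v)) *\<^sub>R v"
    using refl_inner_v[OF False, of x] by (simp add: refl_def[of v "refl v x"])
  also have "\<dots> = x" by (simp add: refl_def)
  finally show ?thesis .
qed

lemma refl_neg: "refl v (- x) = - refl v x"
  by (simp add: refl_def algebra_simps)

lemma refl_e:
  assumes q: "norm q = 1" and e: "norm e = 1"
  shows "refl (q - e) e = q"
proof (cases "q = e")
  case True then show ?thesis by (simp add: refl_def)
next
  case False
  have qq: "q \<bullet> q = 1" and ee: "e \<bullet> e = 1" using q e by (simp_all add: dot_square_norm)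
  have vv: "(q - e) \<bullet> (q - e) = 2 - 2 * (e \<bullet> q)"
    using qq ee by (simp add: inner_diff_left inner_diff_right inner_commute)
  have "(q - e) \<bullet> (q - e) \<noteq> 0" using False by simp
  then have ne: "2 - 2 * (e \<bullet> q) \<noteq> 0" using vv by simp
  have ev: "e \<bullet> (q - e) = e \<bullet> q - 1" using ee by (simp add: inner_diff_right)
  have "2 * (e \<bullet> (q - e)) / ((q - e) \<bullet> (q - e)) = -1"
    unfolding vv ev using ne by (simp add: field_simps)
  then show ?thesis by (simp add: refl_def)
qed

lemma refl_subspace: "subspace S \<Longrightarrow> v \<in> S \<Longrightarrow> x \<in> S \<Longrightarrow> refl v x \<in> S"
  unfolding refl_def by (intro subspace_diff subspace_mul) auto

lemma continuous_on_refl: "continuous_on X (refl v)"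
proof (cases "v = 0")
  case True
  then have "refl v = (\<lambda>x. x)" by (simp add: refl_def fun_eq_iff)
  then show ?thesis by (simp add: continuous_on_id)
next
  case False
  then show ?thesis unfolding refl_def by (intro continuous_intros) auto
qed

lemma unit_inner_1:
  fixes u e :: "'a::real_inner"
  assumes "norm u = 1" "norm e = 1" "u \<bullet> e = 1"
  shows "u = e"
proof -
  have "(norm (u - e))\<^sup>2 = u \<bullet> u - 2 * (u \<bullet> e) + e \<bullet> e"
    by (simp add: power2_norm_eq_inner inner_diff_left inner_diff_right inner_commute)
  also have "\<dots> = 0" using assms by (simp add: dot_square_norm)
  finally show ?thesis by simp
qed

definition clamp :: "real \<Rightarrow> real \<Rightarrow> real" where
  "clamp a t = max (- a) (min a t)"

lemma clamp_neg: "0 \<le> a \<Longrightarrow> clamp a (- t) = - clamp a t"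
  unfolding clamp_def max_def min_def by auto

lemma clamp_abs: "0 \<le> a \<Longrightarrow> \<bar>clamp a t\<bar> \<le> a"
  unfolding clamp_def max_def min_def abs_if by auto

lemma clamp_id: "\<bar>t\<bar> \<le> a \<Longrightarrow> clamp a t = t"
  unfolding clamp_def max_def min_def by (auto split: if_splits)

lemma clamp_mult: "0 \<le> a \<Longrightarrow> \<bar>t\<bar> \<le> 1 \<Longrightarrow> clamp a t * t \<le> a"
proof -
  assume a: "0 \<le> a" and t: "\<bar>t\<bar> \<le> 1"
  have "clamp a t * t \<le> \<bar>clamp a t\<bar> * \<bar>t\<bar>" by (metis abs_ge_self abs_mult)
  also have "\<dots> \<le> a * 1" using clamp_abs[OF a, of t] t by (intro mult_mono) auto
  finally show ?thesis by simp
qed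

definition zz :: "real \<Rightarrow> 'a::real_inner \<Rightarrow> 'a \<Rightarrow> 'a" where
  "zz a e y = y - clamp a (y \<bullet> e) *\<^sub>R e"

definition rho :: "real \<Rightarrow> 'a::real_inner \<Rightarrow> 'a \<Rightarrow> 'a" where
  "rho a e y = inverse (norm (zz a e y)) *\<^sub>R zz a e y"

lemma zz_inner_y:
  fixes y e :: "'a::real_inner"
  assumes a: "0 \<le> a" "a < 1" and y: "norm y = 1" and e: "norm e = 1"
  shows "zz a e y \<bullet> y > 0"
proof -
  have yy: "y \<bullet> y = 1" using y by (simp add: dot_square_norm)
  have "\<bar>y \<bullet> e\<bar> \<le> 1" using Cauchy_Schwarz_ineq2[of y e] y e by simp
  then have "clamp a (y \<bullet> e) * (y \<bullet> e) \<le> a" using clamp_mult a by simp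
  moreover have "zz a e y \<bullet> y = 1 - clamp a (y \<bullet> e) * (y \<bullet> e)"
  proof -
    have "zz a e y \<bullet> y = y \<bullet> y - clamp a (y \<bullet> e) * (e \<bullet> y)"
      by (simp add: zz_def inner_diff_left)
    then show ?thesis using yy inner_commute[of e y] by simp
  qed
  ultimately show ?thesis using a by simp
qed

lemma zz_nz:
  fixes y e :: "'a::real_inner"
  assumes "0 \<le> a" "a < 1" "norm y = 1" "norm e = 1"
  shows "zz a e y \<noteq> 0"
  using zz_inner_y[OF assms] by auto

lemma rho_norm:
  fixes y e :: "'a::real_inner"
  assumes "0 \<le> a" "a < 1" "norm y = 1" "norm e = 1"
  shows "norm (rho a e y) = 1"
  using zz_nz[OF assms] by (simp add: rho_def)

lemma rho_na:
  fixes y e :: "'a::real_inner"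
  assumes "0 \<le> a" "a < 1" "norm y = 1" "norm e = 1"
  shows "rho a e y \<noteq> - y"
proof
  assume eq: "rho a e y = - y"
  have "rho a e y \<bullet> y = inverse (norm (zz a e y)) * (zz a e y \<bullet> y)"
    by (simp add: rho_def)
  moreover have "inverse (norm (zz a e y)) > 0" using zz_nz[OF assms] by simp
  ultimately have "rho a e y \<bullet> y > 0" using zz_inner_y[OF assms] by simp
  moreover have "(- y) \<bullet> y = -1" using assms(3) by (simp add: dot_square_norm)
  ultimately show False using eq by simp
qed

lemma rho_neg:
  fixes y e :: "'a::real_inner"
  assumes "0 \<le> a"
  shows "rho a e (- y) = - rho a e y"
proof -
  have "zz a e (- y) = - zz a e y"
    using clamp_neg[OF assms, of "y \<bullet> e"] by (simp add: zz_def)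
  then show ?thesis by (simp add: rho_def)
qed

lemma continuous_on_rho:
  fixes e :: "'a::real_inner"
  assumes "\<And>y. y \<in> X \<Longrightarrow> zz a e y \<noteq> 0"
  shows "continuous_on X (rho a e)"
proof -
  have cz: "continuous_on X (zz a e)"
    unfolding zz_def clamp_def by (intro continuous_intros)
  show ?thesis
    unfolding rho_def using assms by (intro continuous_intros cz) auto
qed

context benum begin

lemma b_norm: "i < DIM('a) \<Longrightarrow> norm (b i) = 1"
  using b_Basis norm_Basis by blast

lemma b_in_Sph: "i \<le> m \<Longrightarrow> m < DIM('a) \<Longrightarrow> b i \<in> Sph m"
  unfolding Sph_def T_def using b_norm b_inner by auto

lemma b_notin_Sph: "m < DIM('a) \<Longrightarrow> k < m \<Longrightarrow> b m \<notin> Sph k"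
  unfolding Sph_def T_def using b_inner by auto

lemma Sph0: 
  assumes x: "x \<in> Sph 0"
  shows "x = b 0 \<or> x = - b 0"
proof -
  have "x = (\<Sum>i<DIM('a). (x \<bullet> b i) *\<^sub>R b i)" by (simp add: repr)
  also have "\<dots> = (\<Sum>i\<in>{0}. (x \<bullet> b i) *\<^sub>R b i)"
    using x by (intro sum.mono_neutral_right) (auto simp: Sph_def T_def)
  finally have xe: "x = (x \<bullet> b 0) *\<^sub>R b 0" by simp
  have "norm x = 1" using x by (simp add: Sph_def)
  then have "\<bar>x \<bullet> b 0\<bar> = 1" using xe b_norm[of 0]
    by (metis mult.right_neutral norm_scaleR real_norm_def DIM_positive)
  then have "x \<bullet> b 0 = 1 \<or> x \<bullet> b 0 = -1" by linarith
  then show ?thesis using xe by auto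
qed

lemma odd_degree:
  assumes "m < DIM('a)" "continuous_on (Sph m) f" "f ` Sph m \<subseteq> Sph m"
    "\<And>x. x \<in> Sph m \<Longrightarrow> f (- x) = - f x"
  shows "odd (dg m f)"
  using assms
proof (induction m arbitrary: f)
  case 0
  have b0: "b 0 \<in> Sph 0" using b_in_Sph[of 0 0] by simp
  have ff: "f (f x) = x" if x: "x \<in> Sph 0" for x
  proof -
    have fb: "f (b 0) = b 0 \<or> f (b 0) = - b 0" using Sph0 "0.prems"(3) b0 by blast
    have fnb: "f (- b 0) = - f (b 0)" using "0.prems"(4) b0 by blast
    from Sph0[OF x] fb fnb show ?thesis by auto
  qed
  have "dg 0 (f \<circ> f) = dg 0 id"
    by (rule dg_eq[OF "0.prems"(1)]) (simp add: ff)
  then have "dg 0 f * dg 0 f = 1"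
    using dg_compose[OF "0.prems"(1) "0.prems"(2) "0.prems"(3) "0.prems"(2) "0.prems"(3)]
      dg_id[OF "0.prems"(1)] by simp
  then show ?case by (metis even_mult_iff odd_one)
next
  case (Suc k)
  have m: "Suc k < DIM('a)" and k: "k < DIM('a)" using Suc.prems by auto
  have ST: "T k \<subseteq> T (Suc k)" by (rule T_mono) simp
  have dimST: "dim (T k) < dim (T (Suc k))" using dim_T k m by simp
  have SS: "Sph k \<subseteq> Sph (Suc k)" by (rule Sph_mono) simp
  have p2: "continuous_on (sphere 0 1 \<inter> T (Suc k)) f" using Suc.prems(2) by (simp add: Sph_def)
  have p3: "f ` (sphere 0 1 \<inter> T (Suc k)) \<subseteq> sphere 0 1 \<inter> T (Suc k)" using Suc.prems(3) by (simp add: Sph_def)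
  have p4: "\<And>x. x \<in> sphere 0 1 \<inter> T (Suc k) \<Longrightarrow> f (- x) = - f x" using Suc.prems(4) by (simp add: Sph_def)
  obtain g q where cg0: "continuous_on (sphere 0 1 \<inter> T (Suc k)) g"
    and gim0: "g ` (sphere 0 1 \<inter> T (Suc k)) \<subseteq> sphere 0 1 \<inter> T (Suc k)"
    and godd0: "\<And>x. x \<in> sphere 0 1 \<inter> T (Suc k) \<Longrightarrow> g (- x) = - g x"
    and gna0: "\<And>x. x \<in> sphere 0 1 \<inter> T (Suc k) \<Longrightarrow> f x \<noteq> - g x"
    and q0: "q \<in> sphere 0 1 \<inter> T (Suc k)" "q \<notin> g ` (sphere 0 1 \<inter> T k)"
    using odd_approx[OF subspace_T subspace_T ST dimST p2 p3 p4] by blast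
  have cg: "continuous_on (Sph (Suc k)) g" using cg0 by (simp add: Sph_def)
  have gim: "g ` Sph (Suc k) \<subseteq> Sph (Suc k)" using gim0 by (simp add: Sph_def)
  have godd: "\<And>x. x \<in> Sph (Suc k) \<Longrightarrow> g (- x) = - g x" using godd0 by (simp add: Sph_def)
  have gna: "\<And>x. x \<in> Sph (Suc k) \<Longrightarrow> f x \<noteq> - g x" using gna0 by (simp add: Sph_def)
  have q: "q \<in> Sph (Suc k)" "q \<notin> g ` Sph k" using q0 by (simp_all add: Sph_def)
  have "homotopic_with_canon (\<lambda>_. True) (Sph (Suc k)) (sphere 0 1 \<inter> T (Suc k)) f g"
    by (rule homotopic_nonantipodal[OF subspace_T]) (use Suc.prems cg gim gna in \<open>auto simp: Sph_def\<close>)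
  then have dfg: "dg (Suc k) f = dg (Suc k) g"
    by (intro dg_homotopic[OF m]) (simp add: Sph_def)
  define e where "e = b (Suc k)"
  have e: "e \<in> Sph (Suc k)" "norm e = 1" using b_in_Sph[of "Suc k" "Suc k"] b_norm m by (auto simp: e_def)
  have eT: "e \<in> T (Suc k)" using e by (simp add: Sph_def)
  define R where "R = refl (q - e)"
  have qn: "norm q = 1" using q by (simp add: Sph_def)
  have Re: "R e = q" unfolding R_def by (rule refl_e[OF qn e(2)])
  have RR: "R (R x) = x" for x unfolding R_def by (rule refl_invol)
  have Rneg: "R (- x) = - R x" for x unfolding R_def by (rule refl_neg)
  have RSph: "R x \<in> Sph (Suc k)" if "x \<in> Sph (Suc k)" for x
  proof -
    have "q - e \<in> T (Suc k)" using q eT by (simp add: Sph_def subspace_diff[OF subspace_T])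
    then have "R x \<in> T (Suc k)" using that unfolding R_def
      by (intro refl_subspace[OF subspace_T]) (auto simp: Sph_def)
    moreover have "norm (R x) = 1" using that by (simp add: R_def refl_norm Sph_def)
    ultimately show ?thesis by (simp add: Sph_def)
  qed
  have cR: "continuous_on X R" for X unfolding R_def by (rule continuous_on_refl)
  define h where "h = R \<circ> g"
  have ch: "continuous_on (Sph (Suc k)) h"
    unfolding h_def by (rule continuous_on_compose[OF cg cR])
  have him: "h x \<in> Sph (Suc k)" if "x \<in> Sph (Suc k)" for x
    using gim that RSph by (auto simp: h_def)
  have hodd: "h (- x) = - h x" if "x \<in> Sph (Suc k)" for x
    using godd[OF that] Rneg by (simp add: h_def)
  have hne: "h x \<noteq> e" if "x \<in> Sph k" for x
  proof
    assume "h x = e"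
    then have "g x = q" using RR[of "g x"] Re by (simp add: h_def)
    then show False using q(2) that by blast
  qed
  have hne': "h x \<noteq> - e" if x: "x \<in> Sph k" for x
  proof
    assume "h x = - e"
    then have "h (- x) = e" using hodd x SS by auto
    then show False using hne neg_Sph[OF x] by blast
  qed
  have dgh: "dg (Suc k) h = dg (Suc k) R * dg (Suc k) g"
    unfolding h_def by (rule dg_compose[OF m cg gim cR]) (use RSph in blast)
  have hunit: "norm (h x) = 1" if "x \<in> Sph (Suc k)" for x
    using him[OF that] by (simp add: Sph_def)
  have cSk: "compact (Sph k)" by (rule compact_Sph)
  have neSk: "Sph k \<noteq> {}" using b_in_Sph[of 0 k] k by auto
  have cabs: "continuous_on (Sph k) (\<lambda>x. \<bar>h x \<bullet> e\<bar>)"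
    using continuous_on_subset[OF ch SS] by (intro continuous_intros)
  obtain x0 where x0: "x0 \<in> Sph k" and x0max: "\<And>y. y \<in> Sph k \<Longrightarrow> \<bar>h y \<bullet> e\<bar> \<le> \<bar>h x0 \<bullet> e\<bar>"
    using continuous_attains_sup[OF cSk neSk cabs] by blast
  define a where "a = \<bar>h x0 \<bullet> e\<bar>"
  have a0: "0 \<le> a" by (simp add: a_def)
  have a1: "a < 1"
  proof -
    have hx0: "norm (h x0) = 1" using hunit x0 SS by blast
    have "a \<le> 1" unfolding a_def using Cauchy_Schwarz_ineq2[of "h x0" e] hx0 e(2) by simp
    moreover have "a \<noteq> 1"
    proof
      assume "a = 1"
      then have "h x0 \<bullet> e = 1 \<or> (- h x0) \<bullet> e = 1" unfolding a_def by (auto simp: abs_if split: if_splits)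
      then have "h x0 = e \<or> - h x0 = e"
        using unit_inner_1[of "h x0" e] unit_inner_1[of "- h x0" e] hx0 e(2) by auto
      then show False using hne[OF x0] hne'[OF x0] by auto
    qed
    ultimately show ?thesis by simp
  qed
  define G where "G = rho a e \<circ> h"
  have zznz: "zz a e (h x) \<noteq> 0" if "x \<in> Sph (Suc k)" for x
    by (rule zz_nz[OF a0 a1 hunit[OF that] e(2)])
  have cG: "continuous_on (Sph (Suc k)) G"
    unfolding G_def
  proof (rule continuous_on_compose[OF ch])
    show "continuous_on (h ` Sph (Suc k)) (rho a e)"
      by (rule continuous_on_rho) (use zznz in auto)
  qed
  have zzT: "zz a e y \<in> T (Suc k)" if "y \<in> T (Suc k)" for y
    unfolding zz_def using that eT
    by (intro subspace_diff[OF subspace_T] subspace_mul[OF subspace_T])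
  have GSph: "G x \<in> Sph (Suc k)" if x: "x \<in> Sph (Suc k)" for x
  proof -
    have "G x \<in> T (Suc k)" unfolding G_def rho_def o_def
      using zzT him[OF x] by (intro subspace_mul[OF subspace_T]) (auto simp: Sph_def)
    moreover have "norm (G x) = 1" unfolding G_def o_def
      by (rule rho_norm[OF a0 a1 hunit[OF x] e(2)])
    ultimately show ?thesis by (simp add: Sph_def)
  qed
  have Godd: "G (- x) = - G x" if "x \<in> Sph (Suc k)" for x
    using hodd[OF that] rho_neg[OF a0] by (simp add: G_def)
  have Gna: "G x \<noteq> - h x" if "x \<in> Sph (Suc k)" for x
    unfolding G_def o_def by (rule rho_na[OF a0 a1 hunit[OF that] e(2)])
  have "homotopic_with_canon (\<lambda>_. True) (Sph (Suc k)) (sphere 0 1 \<inter> T (Suc k)) G h"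
    by (rule homotopic_nonantipodal[OF subspace_T cG ch]) (use GSph him Gna in \<open>auto simp: Sph_def\<close>)
  then have dGh: "dg (Suc k) G = dg (Suc k) h"
    by (intro dg_homotopic[OF m]) (simp add: Sph_def)
  have GSk: "G x \<in> Sph k" if x: "x \<in> Sph k" for x
  proof -
    let ?y = "h x"
    have xS: "x \<in> Sph (Suc k)" using x SS by blast
    have yT: "?y \<in> T (Suc k)" using him[OF xS] by (simp add: Sph_def)
    have "\<bar>?y \<bullet> e\<bar> \<le> a" using x0max[OF x] by (simp add: a_def)
    then have cl: "clamp a (?y \<bullet> e) = ?y \<bullet> e" by (rule clamp_id)
    have zk: "zz a e ?y \<in> T k"
      unfolding T_def
    proof (intro CollectI allI impI)
      fix j assume j: "j < DIM('a)" "k < j"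
      show "zz a e ?y \<bullet> b j = 0"
      proof (cases "j = Suc k")
        case True
        then show ?thesis using e(2) cl
          by (simp add: zz_def e_def inner_diff_left b_inner[OF m m])
      next
        case False
        then have "Suc k < j" using j by simp
        then have "?y \<bullet> b j = 0" "e \<bullet> b j = 0"
          using yT j b_inner[OF m j(1)] by (auto simp: T_def e_def)
        then show ?thesis by (simp add: zz_def inner_diff_left)
      qed
    qed
    have "G x \<in> T k" unfolding G_def rho_def o_def
      using zk by (intro subspace_mul[OF subspace_T])
    moreover have "norm (G x) = 1" unfolding G_def o_def
      by (rule rho_norm[OF a0 a1 hunit[OF xS] e(2)])
    ultimately show ?thesis by (simp add: Sph_def)
  qed
  have "odd (dg k G)"
  proof (rule Suc.IH[OF k])
    show "continuous_on (Sph k) G" using continuous_on_subset[OF cG SS] .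
    show "G ` Sph k \<subseteq> Sph k" using GSk by blast
    show "G (- x) = - G x" if "x \<in> Sph k" for x using Godd that SS by blast
  qed
  moreover have "even (dg (Suc k) G - dg (Suc k - 1) G)"
    by (rule dg_step[OF _ m cG]) (use GSph Godd GSk in auto)
  ultimately have "odd (dg (Suc k) G)" by simp
  then have "odd (dg (Suc k) R * dg (Suc k) g)" using dGh dgh by simp
  then have "odd (dg (Suc k) g)" by simp
  then show ?case using dfg by simp
qed

lemma borsuk_ulam:
  assumes k0: "0 < k" and k: "k < DIM('a)" and cf: "continuous_on (Sph k) f"
    and fim: "f ` Sph k \<subseteq> Sph (k - 1)" and odd: "\<And>x. x \<in> Sph k \<Longrightarrow> f (- x) = - f x"
  shows False
proof -
  have SS: "Sph (k - 1) \<subseteq> Sph k" by (rule Sph_mono) simp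
  have fim': "f ` Sph k \<subseteq> Sph k" using fim SS by blast
  have "dg k f = 0"
  proof (rule dg_nonsurj[OF k cf fim'])
    show "b k \<in> Sph k" using b_in_Sph k by simp
    show "b k \<notin> f ` Sph k" using fim b_notin_Sph[OF k, of "k - 1"] k0 by auto
  qed
  moreover have "even (dg k f - dg (k - 1) f)"
  proof -
    have fim1: "f ` Sph (k - 1) \<subseteq> Sph (k - 1)" by (rule order_trans[OF image_mono[OF SS] fim])
    show ?thesis by (rule dg_step[OF k0 k cf fim' _ fim1]) (rule odd)
  qed
  moreover have "odd (dg (k - 1) f)"
  proof (rule odd_degree)
    show "k - 1 < DIM('a)" using k by simp
    show "continuous_on (Sph (k - 1)) f" using continuous_on_subset[OF cf SS] .
    show "f ` Sph (k - 1) \<subseteq> Sph (k - 1)" by (rule order_trans[OF image_mono[OF SS] fim])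
    show "f (- x) = - f x" if "x \<in> Sph (k - 1)" for x using odd that SS by blast
  qed
  ultimately show False by simp
qed

end

lemma enum_prefix:
  fixes S :: "'n::finite set"
  obtains \<nu> where "bij_betw \<nu> {..<CARD('n)} (UNIV::'n set)" "\<nu> ` {..<card S} = S"
proof -
  let ?c = "card S" and ?N = "CARD('n)"
  obtain h1 where h1: "bij_betw h1 {0..<?c} S" using ex_bij_betw_nat_finite[of S] by auto
  obtain h2 where h2: "bij_betw h2 {0..<card (- S)} (- S)" using ex_bij_betw_nat_finite[of "- S"] by auto
  have cS: "card (- S) = ?N - ?c"
    by (simp add: Compl_eq_Diff_UNIV card_Diff_subset)
  have cle: "?c \<le> ?N" by (simp add: card_mono)
  define \<nu> where "\<nu> i = (if i < ?c then h1 i else h2 (i - ?c))" for i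
  have A: "bij_betw \<nu> {..<?c} S"
  proof -
    have "bij_betw h1 {..<?c} S" using h1 by (simp add: atLeast0LessThan)
    then show ?thesis by (rule bij_betw_cong[THEN iffD1, rotated]) (simp add: \<nu>_def)
  qed
  have sh: "bij_betw (\<lambda>i. i - ?c) {?c..<?N} {0..<card (- S)}"
    unfolding bij_betw_def
  proof
    show "inj_on (\<lambda>i. i - ?c) {?c..<?N}" by (auto simp: inj_on_def)
    show "(\<lambda>i. i - ?c) ` {?c..<?N} = {0..<card (- S)}"
    proof (cases "?c < ?N")
      case True
      then show ?thesis by (simp add: image_minus_const_atLeastLessThan_nat cS)
    next
      case False
      then have "?c = ?N" using cle by simp
      then show ?thesis using cS by simp
    qed
  qed
  have B: "bij_betw \<nu> {?c..<?N} (- S)"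
  proof -
    have "bij_betw (h2 \<circ> (\<lambda>i. i - ?c)) {?c..<?N} (- S)" by (rule bij_betw_trans[OF sh h2])
    then show ?thesis by (rule bij_betw_cong[THEN iffD1, rotated]) (simp add: \<nu>_def)
  qed
  have "bij_betw \<nu> ({..<?c} \<union> {?c..<?N}) (S \<union> - S)"
    by (rule bij_betw_combine[OF A B]) simp
  moreover have "{..<?c} \<union> {?c..<?N} = {..<?N}" using cle by auto
  ultimately have "bij_betw \<nu> {..<?N} UNIV" by simp
  moreover have "\<nu> ` {..<?c} = S" using A by (simp add: bij_betw_def)
  ultimately show ?thesis using that by blast
qed

lemma bij_axis: "bij_betw (\<lambda>i. axis i (1::real)) (UNIV::'n::finite set) Basis"
  unfolding bij_betw_def
proof
  show "inj (\<lambda>i. axis i (1::real) :: real^'n)" by (auto simp: inj_on_def axis_eq_axis)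
  show "range (\<lambda>i. axis i (1::real)) = (Basis :: (real^'n) set)" by (auto simp: Basis_vec_def)
qed

lemma cont_nth: "continuous_on X (\<lambda>x::real^'n. x $ i)"
proof -
  have "continuous_on X (\<lambda>x::real^'n. x \<bullet> axis i 1)" by (intro continuous_intros)
  then show ?thesis by (simp add: cart_eq_inner_axis[symmetric])
qed

lemma genus_bound:
  fixes S :: "'n::finite set" and mu :: "'n \<Rightarrow> real" and p :: real
  assumes mu: "\<And>i. mu i > 0" and p: "p > 0"
    and om: "odd_map_to_punctured {f \<in> p_sphere mu p. \<forall>i. i \<notin> S \<longrightarrow> f $ i = 0} k"
  shows "card S \<le> k"
proof (rule ccontr)
  assume "\<not> card S \<le> k"
  then have kS: "k < card S" by simp
  define B where "B = {f \<in> p_sphere mu p. \<forall>i. i \<notin> S \<longrightarrow> f $ i = 0}"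
  obtain \<nu> where \<nu>: "bij_betw \<nu> {..<CARD('n)} (UNIV::'n set)" "\<nu> ` {..<card S} = S"
    by (rule enum_prefix)
  define b where "b i = axis (\<nu> i) (1::real)" for i
  have DIMn: "DIM(real^'n) = CARD('n)" by simp
  have bb: "bij_betw b {..<DIM(real^'n)} Basis"
  proof -
    have "bij_betw ((\<lambda>i. axis i (1::real)) \<circ> \<nu>) {..<CARD('n)} (Basis :: (real^'n) set)"
      by (rule bij_betw_trans[OF \<nu>(1) bij_axis])
    moreover have "b = (\<lambda>i. axis (\<nu> i) (1::real))" by (simp add: b_def fun_eq_iff)
    ultimately show ?thesis by (simp add: o_def)
  qed
  interpret be: benum b by (rule benum.intro[OF bb])
  have kN: "k < DIM(real^'n)" using kS card_mono[of UNIV S] by simp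
  have binner: "x \<bullet> b i = x $ \<nu> i" for x :: "real^'n" and i
    by (simp add: b_def inner_axis)
  have supp: "x $ j = 0" if x: "x \<in> be.Sph k" and j: "j \<notin> S" for x j
  proof -
    obtain i where i: "i < CARD('n)" "j = \<nu> i" using \<nu>(1) unfolding bij_betw_def by auto
    have "\<not> i < card S" using i j \<nu>(2) by auto
    then have "k < i" using kS by simp
    then have "x \<bullet> b i = 0" using x i by (auto simp: be.Sph_def be.T_def)
    then show ?thesis using i binner by simp
  qed
  define s where "s x = (\<Sum>i\<in>UNIV. mu i * \<bar>x $ i\<bar> powr p)" for x :: "real^'n"
  define c where "c x = s x powr (1 / p)" for x
  define P where "P x = (1 / c x) *\<^sub>R x" for x
  have s_pos: "s x > 0" if "x \<noteq> 0" for x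
  proof -
    obtain j where j: "x $ j \<noteq> 0" using \<open>x \<noteq> 0\<close> by (metis vec_eq_iff zero_index)
    have "0 < mu j * \<bar>x $ j\<bar> powr p" using mu[of j] j by simp
    also have "\<dots> \<le> s x" unfolding s_def
      by (rule member_le_sum) (auto intro!: mult_nonneg_nonneg less_imp_le[OF mu])
    finally show ?thesis .
  qed
  have c_pos: "c x > 0" if "x \<noteq> 0" for x using s_pos[OF that] by (simp add: c_def)
  have s_neg: "s (- x) = s x" for x by (simp add: s_def)
  have P_neg: "P (- x) = - P x" for x by (simp add: P_def c_def s_neg)
  have Sph_nz: "x \<noteq> 0" if "x \<in> be.Sph k" for x using that by (auto simp: be.Sph_def)
  have PB: "P x \<in> B" if x: "x \<in> be.Sph k" for x
  proof -
    have xnz: "x \<noteq> 0" using Sph_nz[OF x] .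
    have cp: "c x > 0" using c_pos[OF xnz] .
    have "(\<Sum>i\<in>UNIV. mu i * \<bar>P x $ i\<bar> powr p) = (\<Sum>i\<in>UNIV. mu i * \<bar>x $ i\<bar> powr p) / c x powr p"
      unfolding P_def using cp by (simp add: sum_divide_distrib abs_mult powr_divide powr_mult)
    also have "c x powr p = s x"
      using s_pos[OF xnz] p by (simp add: c_def powr_powr)
    finally have "(\<Sum>i\<in>UNIV. mu i * \<bar>P x $ i\<bar> powr p) = 1"
      using s_pos[OF xnz] by (simp add: s_def)
    moreover have "\<forall>i. i \<notin> S \<longrightarrow> P x $ i = 0" using supp[OF x] by (simp add: P_def)
    ultimately show ?thesis by (simp add: B_def p_sphere_def)
  qed
  have cs: "continuous_on X s" for X
    unfolding s_def
    by (intro continuous_on_sum continuous_on_mult continuous_on_const continuous_on_powr' 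
        continuous_on_rabs cont_nth) (use p in auto)
  have cP: "continuous_on (be.Sph k) P"
  proof -
    have cc: "continuous_on (be.Sph k) c"
      unfolding c_def using s_pos Sph_nz
      by (intro continuous_on_powr cs continuous_on_const) (metis less_irrefl)
    show ?thesis unfolding P_def using c_pos Sph_nz
      by (intro continuous_intros cc) (metis less_irrefl)
  qed
  have om': "odd_map_to_punctured B k" using om by (simp add: B_def)
  then obtain g :: "nat \<Rightarrow> real^'n \<Rightarrow> real" where g: "(\<forall>l<k. continuous_on B (g l) \<and> (\<forall>x\<in>B. g l (- x) = - g l x)) \<and>
      (\<forall>x\<in>B. \<exists>l<k. g l x \<noteq> 0)"
    unfolding odd_map_to_punctured_def by (elim exE) (rule that)
  have gc: "\<And>l. l < k \<Longrightarrow> continuous_on B (g l)" using g by blast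
  have godd: "\<And>l y. l < k \<Longrightarrow> y \<in> B \<Longrightarrow> g l (- y) = - g l y" using g by blast
  have gnz: "\<And>y. y \<in> B \<Longrightarrow> \<exists>l<k. g l y \<noteq> 0" using g by blast
  have b0: "b 0 \<in> be.Sph k" using be.b_in_Sph[of 0 k] kN by simp
  show False
  proof (cases "k = 0")
    case True
    then show False using gnz[OF PB[OF b0]] by simp
  next
    case False
    then have k0: "0 < k" by simp
    define v where "v x = (\<Sum>l<k. g l (P x) *\<^sub>R b l)" for x
    define phi where "phi x = (1 / norm (v x)) *\<^sub>R v x" for x
    have v_inner: "v x \<bullet> b j = (if j < k then g j (P x) else 0)" if j: "j < DIM(real^'n)" for x j
    proof -
      have "v x \<bullet> b j = (\<Sum>l<k. g l (P x) * (b l \<bullet> b j))"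
        by (simp add: v_def inner_sum_left)
      also have "\<dots> = (\<Sum>l<k. if l = j then g j (P x) else 0)"
        using kN j by (intro sum.cong) (auto simp: be.b_inner)
      also have "\<dots> = (if j < k then g j (P x) else 0)" by simp
      finally show ?thesis .
    qed
    have vT: "v x \<in> be.T (k - 1)" for x
      unfolding be.T_def using v_inner by auto
    have vnz: "v x \<noteq> 0" if x: "x \<in> be.Sph k" for x
    proof
      assume v0: "v x = 0"
      obtain l where l: "l < k" "g l (P x) \<noteq> 0" using gnz[OF PB[OF x]] by blast
      have "v x \<bullet> b l = g l (P x)" using v_inner[of l x] l kN by simp
      then show False using v0 l by simp
    qed
    have phiS: "phi x \<in> be.Sph (k - 1)" if x: "x \<in> be.Sph k" for x
    proof -
      have "phi x \<in> be.T (k - 1)" unfolding phi_def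
        by (rule subspace_mul[OF be.subspace_T vT])
      moreover have "norm (phi x) = 1" using vnz[OF x] by (simp add: phi_def)
      ultimately show ?thesis by (simp add: be.Sph_def)
    qed
    have v_neg: "v (- x) = - v x" if x: "x \<in> be.Sph k" for x
    proof -
      have "g l (P (- x)) = - g l (P x)" if "l < k" for l
        using godd[OF that PB[OF x]] by (simp add: P_neg)
      then show ?thesis by (simp add: v_def sum_negf[symmetric])
    qed
    have phi_neg: "phi (- x) = - phi x" if x: "x \<in> be.Sph k" for x
      using v_neg[OF x] by (simp add: phi_def)
    have cv: "continuous_on (be.Sph k) v"
    proof -
      have "continuous_on (be.Sph k) (\<lambda>x. g l (P x))" if "l < k" for l
        by (rule continuous_on_compose2[OF gc[OF that] cP]) (use PB in blast)
      then show ?thesis unfolding v_def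
        by (intro continuous_on_sum continuous_on_scaleR continuous_on_const) auto
    qed
    have cphi: "continuous_on (be.Sph k) phi"
      unfolding phi_def using vnz by (intro continuous_intros cv) auto
    show False
      by (rule be.borsuk_ulam[OF k0 kN cphi]) (use phiS phi_neg in auto)
  qed
qed

definition numer :: "('n::finite \<Rightarrow> 'n \<Rightarrow> bool) \<Rightarrow> ('n \<Rightarrow> 'n \<Rightarrow> real) \<Rightarrow> ('n \<Rightarrow> 'n \<Rightarrow> real) \<Rightarrow>
   ('n \<Rightarrow> real) \<Rightarrow> real \<Rightarrow> real^'n \<Rightarrow> real" where
  "numer adj sg w kappa p f =
     (1/2) * (\<Sum>i\<in>UNIV. \<Sum>j\<in>{j. adj i j}. w i j * \<bar>f$i - sg i j * f$j\<bar> powr p)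
       + (\<Sum>i\<in>UNIV. kappa i * \<bar>f$i\<bar> powr p)"

lemma rayleigh_sphere:
  "f \<in> p_sphere mu p \<Longrightarrow> rayleigh_p adj sg w mu kappa p f = numer adj sg w kappa p f"
  by (simp add: rayleigh_p_def p_sphere_def numer_def)

lemma sphere_coord:
  assumes f: "f \<in> p_sphere mu p" and mu: "\<And>i. mu i > 0"
  shows "\<bar>f$i\<bar> powr p \<le> 1 / mu i"
proof -
  have "mu i * \<bar>f$i\<bar> powr p \<le> (\<Sum>j\<in>UNIV. mu j * \<bar>f$j\<bar> powr p)"
    by (rule member_le_sum) (auto intro: mult_nonneg_nonneg less_imp_le[OF mu])
  also have "\<dots> = 1" using f by (simp add: p_sphere_def)
  finally show ?thesis using mu[of i] by (simp add: field_simps mult.commute)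
qed

lemma kappa_lower:
  assumes f: "f \<in> p_sphere mu p" and mu: "\<And>i. mu i > 0"
  shows "- (\<Sum>i\<in>UNIV. \<bar>kappa i\<bar> / mu i) \<le> (\<Sum>i\<in>UNIV. kappa i * \<bar>f$i\<bar> powr p)"
proof -
  have "- (\<bar>kappa i\<bar> / mu i) \<le> kappa i * \<bar>f$i\<bar> powr p" for i
  proof -
    have a: "\<bar>f$i\<bar> powr p \<le> 1 / mu i" by (rule sphere_coord[OF f mu])
    have "- (\<bar>kappa i\<bar> / mu i) = - (\<bar>kappa i\<bar> * (1 / mu i))" by simp
    also have "\<dots> \<le> - (\<bar>kappa i\<bar> * \<bar>f$i\<bar> powr p)"
      using mult_left_mono[OF a, of "\<bar>kappa i\<bar>"] by simp
    also have "\<dots> \<le> kappa i * \<bar>f$i\<bar> powr p"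
    proof -
      have "\<bar>kappa i\<bar> * \<bar>f$i\<bar> powr p = \<bar>kappa i * \<bar>f$i\<bar> powr p\<bar>" by (simp add: abs_mult)
      then show ?thesis by linarith
    qed
    finally show ?thesis .
  qed
  then have "(\<Sum>i\<in>UNIV. - (\<bar>kappa i\<bar> / mu i)) \<le> (\<Sum>i\<in>UNIV. kappa i * \<bar>f$i\<bar> powr p)"
    by (rule sum_mono)
  then show ?thesis by (simp add: sum_negf)
qed

lemma kappa_upper:
  assumes f: "f \<in> p_sphere mu p" and mu: "\<And>i. mu i > 0"
  shows "(\<Sum>i\<in>UNIV. kappa i * \<bar>f$i\<bar> powr p) \<le> (\<Sum>i\<in>UNIV. \<bar>kappa i\<bar> / mu i)"
proof (rule sum_mono)
  fix i :: 'a
  have a: "\<bar>f$i\<bar> powr p \<le> 1 / mu i" by (rule sphere_coord[OF f mu])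
  have "kappa i * \<bar>f$i\<bar> powr p \<le> \<bar>kappa i\<bar> * \<bar>f$i\<bar> powr p"
    by (rule mult_right_mono) auto
  also have "\<dots> \<le> \<bar>kappa i\<bar> * (1 / mu i)" by (rule mult_left_mono[OF a]) simp
  finally show "kappa i * \<bar>f$i\<bar> powr p \<le> \<bar>kappa i\<bar> / mu i" by simp
qed

lemma numer_lower:
  assumes f: "f \<in> p_sphere mu p" and mu: "\<And>i. mu i > 0"
    and w: "\<And>i j. adj i j \<Longrightarrow> w i j > 0"
  shows "- (\<Sum>i\<in>UNIV. \<bar>kappa i\<bar> / mu i) \<le> numer adj sg w kappa p f"
proof -
  have "0 \<le> (\<Sum>i\<in>UNIV. \<Sum>j\<in>{j. adj i j}. w i j * \<bar>f$i - sg i j * f$j\<bar> powr p)"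
    by (intro sum_nonneg mult_nonneg_nonneg) (auto intro: less_imp_le[OF w])
  then show ?thesis using kappa_lower[OF f mu, of kappa] by (simp add: numer_def)
qed

lemma coord_bound:
  assumes f: "f \<in> p_sphere mu p" and mu: "\<And>i. mu i > 0" and p: "p > 0"
  shows "\<bar>f$i\<bar> \<le> (1 / mu i) powr (1 / p)"
proof -
  have "\<bar>f$i\<bar> = (\<bar>f$i\<bar> powr p) powr (1 / p)"
    using p by (simp add: powr_powr)
  also have "\<dots> \<le> (1 / mu i) powr (1 / p)"
    using sphere_coord[OF f mu] p by (intro powr_mono2) auto
  finally show ?thesis .
qed

lemma numer_upper:
  fixes adj :: "'n::finite \<Rightarrow> 'n \<Rightarrow> bool"
  assumes mu: "\<And>i. mu i > 0" and p: "p > 0"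
    and w: "\<And>i j. adj i j \<Longrightarrow> w i j > 0"
    and sg: "\<And>i j. adj i j \<Longrightarrow> \<bar>sg i j\<bar> = 1"
  shows "\<exists>C. \<forall>f \<in> p_sphere mu p. numer adj sg w kappa p f \<le> C"
proof -
  define K where "K = (\<Sum>i\<in>UNIV. (1 / mu i) powr (1 / p))"
  define C where "C = (1/2) * (\<Sum>i\<in>UNIV. \<Sum>j\<in>{j. adj i j}. w i j * (2 * K) powr p)
                       + (\<Sum>i\<in>UNIV. \<bar>kappa i\<bar> / mu i)"
  have Ki: "(1 / mu i) powr (1 / p) \<le> K" for i
    unfolding K_def by (rule member_le_sum) auto
  show ?thesis
  proof (intro exI ballI)
    fix f assume f: "f \<in> p_sphere mu p"
    have fi: "\<bar>f$i\<bar> \<le> K" for i using coord_bound[OF f mu p, of i] Ki[of i] by simp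
    have tm: "w i j * \<bar>f$i - sg i j * f$j\<bar> powr p \<le> w i j * (2 * K) powr p" if a: "adj i j" for i j
    proof -
      have "\<bar>f$i - sg i j * f$j\<bar> \<le> \<bar>f$i\<bar> + \<bar>sg i j\<bar> * \<bar>f$j\<bar>"
        by (metis abs_mult abs_triangle_ineq4)
      also have "\<dots> \<le> 2 * K" using fi[of i] fi[of j] sg[OF a] by simp
      finally have "\<bar>f$i - sg i j * f$j\<bar> powr p \<le> (2 * K) powr p"
        using p by (intro powr_mono2) auto
      then show ?thesis using w[OF a] by (intro mult_left_mono) auto
    qed
    have "(\<Sum>i\<in>UNIV. \<Sum>j\<in>{j. adj i j}. w i j * \<bar>f$i - sg i j * f$j\<bar> powr p)
          \<le> (\<Sum>i\<in>UNIV. \<Sum>j\<in>{j. adj i j}. w i j * (2 * K) powr p)"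
      by (intro sum_mono) (use tm in auto)
    then show "numer adj sg w kappa p f \<le> C"
      using kappa_upper[OF f mu, of kappa] by (simp add: numer_def C_def)
  qed
qed

lemma numer_indep:
  fixes adj :: "'n::finite \<Rightarrow> 'n \<Rightarrow> bool"
  assumes f: "f \<in> p_sphere mu p" and mu: "\<And>i. mu i > 0" and p: "p > 0"
    and sym: "\<And>i j. adj i j \<Longrightarrow> adj j i"
    and w: "\<And>i j. adj i j \<Longrightarrow> w i j = w j i"
    and sg: "\<And>i j. adj i j \<Longrightarrow> \<bar>sg i j\<bar> = 1"
    and ind: "\<And>i j. adj i j \<Longrightarrow> f$i = 0 \<or> f$j = 0"
  shows "numer adj sg w kappa p f
     = (\<Sum>i\<in>UNIV. ((\<Sum>j\<in>{j. adj i j}. w i j) + kappa i) * \<bar>f$i\<bar> powr p)"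
proof -
  define a where "a i = \<bar>f$i\<bar> powr p" for i
  have edge: "\<bar>f$i - sg i j * f$j\<bar> powr p = a i + a j" if "adj i j" for i j
    using ind[OF that] sg[OF that] p by (auto simp: a_def abs_mult)
  have sw: "(\<Sum>i\<in>UNIV. \<Sum>j\<in>{j. adj i j}. w i j * a j) = (\<Sum>j\<in>UNIV. \<Sum>i\<in>{i. adj i j}. w i j * a j)"
    using sum.swap_restrict[of "UNIV::'n set" "UNIV::'n set" "\<lambda>i j. w i j * a j" adj] by simp
  have sw2: "(\<Sum>i\<in>{i. adj i j}. w i j * a j) = (\<Sum>i\<in>{i. adj j i}. w j i) * a j" for j
  proof -
    have "{i. adj i j} = {i. adj j i}" using sym by blast
    then have "(\<Sum>i\<in>{i. adj i j}. w i j * a j) = (\<Sum>i\<in>{i. adj j i}. w i j * a j)" by simp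
    also have "\<dots> = (\<Sum>i\<in>{i. adj j i}. w j i * a j)"
      by (rule sum.cong[OF refl]) (use w sym in auto)
    finally show ?thesis by (simp add: sum_distrib_right)
  qed
  have "(\<Sum>i\<in>UNIV. \<Sum>j\<in>{j. adj i j}. w i j * \<bar>f$i - sg i j * f$j\<bar> powr p)
      = (\<Sum>i\<in>UNIV. \<Sum>j\<in>{j. adj i j}. w i j * a i + w i j * a j)"
    by (rule sum.cong[OF refl], rule sum.cong[OF refl]) (simp add: edge distrib_left)
  also have "\<dots> = (\<Sum>i\<in>UNIV. \<Sum>j\<in>{j. adj i j}. w i j * a i) + (\<Sum>i\<in>UNIV. \<Sum>j\<in>{j. adj i j}. w i j * a j)"
    by (simp add: sum.distrib)
  also have "\<dots> = (\<Sum>i\<in>UNIV. (\<Sum>j\<in>{j. adj i j}. w i j) * a i) + (\<Sum>j\<in>UNIV. (\<Sum>i\<in>{i. adj j i}. w j i) * a j)"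
    unfolding sw sw2 by (simp add: sum_distrib_right)
  finally have "(\<Sum>i\<in>UNIV. \<Sum>j\<in>{j. adj i j}. w i j * \<bar>f$i - sg i j * f$j\<bar> powr p)
      = 2 * (\<Sum>i\<in>UNIV. (\<Sum>j\<in>{j. adj i j}. w i j) * a i)" by simp
  then show ?thesis
    by (simp add: numer_def a_def distrib_right sum.distrib)
qed

lemma genus_nonempty:
  assumes "kras_genus X \<ge> enat k" "1 \<le> k"
  shows "X \<noteq> {}"
proof
  assume X: "X = {}"
  have om0: "odd_map_to_punctured X 0" unfolding odd_map_to_punctured_def X by simp
  then have "(LEAST k. odd_map_to_punctured X k) = 0" by (simp add: Least_eq_0)
  then have "kras_genus X = 0" using om0 unfolding kras_genus_def by (auto simp: zero_enat_def)
  then show False using assms by (simp add: zero_enat_def)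
qed

lemma cont_psum: "p > 0 \<Longrightarrow> continuous_on X (\<lambda>f::real^'n::finite. \<Sum>i\<in>UNIV. mu i * \<bar>f$i\<bar> powr p)"
  by (intro continuous_on_sum continuous_on_mult continuous_on_const continuous_on_powr'
        continuous_on_rabs cont_nth) auto

theorem proposition6p6:
  fixes adj :: "'n::finite \<Rightarrow> 'n \<Rightarrow> bool"
    and sg w :: "'n \<Rightarrow> 'n \<Rightarrow> real"
    and mu kappa :: "'n \<Rightarrow> real"
    and p :: real
  assumes "simple_graph adj"
    and "\<And>i j. adj i j \<Longrightarrow> sg i j \<in> {-1, 1} \<and> sg i j = sg j i"
    and "\<And>i j. adj i j \<Longrightarrow> w i j > 0 \<and> w i j = w j i"
    and "\<And>i. mu i > 0"
    and "p > 1"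
  shows "var_eigenvalue adj sg w mu kappa p (independence_number adj)
           \<le> Max (range (\<lambda>i. ((\<Sum>j\<in>{j. adj i j}. w i j) + kappa i) / mu i))"
proof -
  let ?a = "independence_number adj"
  let ?R = "rayleigh_p adj sg w mu kappa p"
  let ?F = "genus_family ?a (p_sphere mu p)"
  define M where "M = Max (range (\<lambda>i. ((\<Sum>j\<in>{j. adj i j}. w i j) + kappa i) / mu i))"
  have sym: "\<And>i j. adj i j \<Longrightarrow> adj j i" and irr: "\<And>i. \<not> adj i i"
    using assms(1) by (auto simp: simple_graph_def)
  have mu: "\<And>i. mu i > 0" by (rule assms(4))
  have p0: "p > 0" using assms(5) by simp
  have wpos: "\<And>i j. adj i j \<Longrightarrow> w i j > 0" and wsym: "\<And>i j. adj i j \<Longrightarrow> w i j = w j i"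
    using assms(3) by auto
  have sgabs: "\<And>i j. adj i j \<Longrightarrow> \<bar>sg i j\<bar> = 1" using assms(2) by fastforce
  define I where "I = {S::'n set. independent_set adj S}"
  have finI: "finite I" by (rule finite_subset[of _ UNIV]) auto
  have eI: "{} \<in> I" by (simp add: I_def independent_set_def)
  have aMax: "?a = Max (card ` I)" by (simp add: independence_number_def I_def)
  have "?a \<in> card ` I" unfolding aMax using finI eI by (intro Max_in) auto
  then obtain S where S: "independent_set adj S" "card S = ?a" by (auto simp: I_def)
  have a1: "1 \<le> ?a"
  proof -
    have "{undefined} \<in> I" using irr by (simp add: I_def independent_set_def)
    then have "card {undefined::'n} \<in> card ` I" by blast
    then have "card {undefined::'n} \<le> Max (card ` I)" using finI by (intro Max_ge) auto
    then show ?thesis using aMax by simp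
  qed
  define B where "B = {f \<in> p_sphere mu p. \<forall>i. i \<notin> S \<longrightarrow> f $ i = 0}"
  have Bsub: "B \<subseteq> p_sphere mu p" by (auto simp: B_def)
  have closedB: "closed B"
  proof -
    have c1: "closed (p_sphere mu p)"
      unfolding p_sphere_def by (intro closed_Collect_eq cont_psum[OF p0] continuous_on_const)
    have "{f::real^'n. \<forall>i. i \<notin> S \<longrightarrow> f $ i = 0} = (\<Inter>i\<in>- S. {f. f $ i = 0})" by auto
    moreover have "closed (\<Inter>i\<in>- S. {f::real^'n. f $ i = 0})"
      by (intro closed_INT ballI closed_Collect_eq cont_nth continuous_on_const)
    ultimately have c2: "closed {f::real^'n. \<forall>i. i \<notin> S \<longrightarrow> f $ i = 0}" by simp
    have "B = p_sphere mu p \<inter> {f. \<forall>i. i \<notin> S \<longrightarrow> f $ i = 0}" by (auto simp: B_def)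
    then show ?thesis using c1 c2 by (simp add: closed_Int)
  qed
  have negB: "- f \<in> B" if "f \<in> B" for f using that by (simp add: B_def p_sphere_def)
  have symB: "uminus ` B = B"
  proof (rule subset_antisym)
    show "uminus ` B \<subseteq> B" using negB by blast
    show "B \<subseteq> uminus ` B"
    proof
      fix f assume "f \<in> B"
      then have "- f \<in> B" by (rule negB)
      then show "f \<in> uminus ` B" by (rule rev_image_eqI) simp
    qed
  qed
  have genB: "kras_genus B \<ge> enat ?a"
  proof (cases "\<exists>k. odd_map_to_punctured B k")
    case True
    then have "odd_map_to_punctured B (LEAST k. odd_map_to_punctured B k)" by (rule LeastI_ex)
    then have "card S \<le> (LEAST k. odd_map_to_punctured B k)"
      unfolding B_def by (rule genus_bound[OF mu p0])
    then show ?thesis using True S(2) by (simp add: kras_genus_def)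
  next
    case False
    then show ?thesis by (simp add: kras_genus_def)
  qed
  have BF: "B \<in> ?F" using Bsub closedB symB genB by (simp add: genus_family_def)
  have Bne: "B \<noteq> {}" by (rule genus_nonempty[OF genB a1])
  have RB: "?R f \<le> M" if f: "f \<in> B" for f
  proof -
    have fs: "f \<in> p_sphere mu p" using f by (simp add: B_def)
    have ind: "f$i = 0 \<or> f$j = 0" if "adj i j" for i j
    proof -
      have "\<not> (i \<in> S \<and> j \<in> S)" using S(1) that by (auto simp: independent_set_def)
      then show ?thesis using f by (auto simp: B_def)
    qed
    have "?R f = numer adj sg w kappa p f" by (rule rayleigh_sphere[OF fs])
    also have "\<dots> = (\<Sum>i\<in>UNIV. ((\<Sum>j\<in>{j. adj i j}. w i j) + kappa i) * \<bar>f$i\<bar> powr p)"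
      by (rule numer_indep[OF fs mu p0 sym wsym sgabs ind])
    also have "\<dots> \<le> (\<Sum>i\<in>UNIV. M * (mu i * \<bar>f$i\<bar> powr p))"
    proof (rule sum_mono)
      fix i :: 'n
      have "((\<Sum>j\<in>{j. adj i j}. w i j) + kappa i) / mu i \<le> M"
        unfolding M_def by (rule Max_ge) auto
      then have "(\<Sum>j\<in>{j. adj i j}. w i j) + kappa i \<le> M * mu i"
        using mu[of i] by (simp add: divide_le_eq)
      then have "((\<Sum>j\<in>{j. adj i j}. w i j) + kappa i) * \<bar>f$i\<bar> powr p \<le> (M * mu i) * \<bar>f$i\<bar> powr p"
        by (rule mult_right_mono) simp
      then show "((\<Sum>j\<in>{j. adj i j}. w i j) + kappa i) * \<bar>f$i\<bar> powr p \<le> M * (mu i * \<bar>f$i\<bar> powr p)"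
        by (simp add: mult.assoc)
    qed
    also have "\<dots> = M" using fs by (simp add: p_sphere_def flip: sum_distrib_left)
    finally show ?thesis .
  qed
  obtain C where C: "\<forall>f\<in>p_sphere mu p. numer adj sg w kappa p f \<le> C"
    using numer_upper[OF mu p0 wpos sgabs, where kappa=kappa] by (rule exE)
  define Lb where "Lb = - (\<Sum>i\<in>UNIV. \<bar>kappa i\<bar> / mu i)"
  have bddF: "bdd_below ((\<lambda>B. Sup (?R ` B)) ` ?F)"
  proof (rule bdd_belowI)
    fix x assume "x \<in> (\<lambda>B. Sup (?R ` B)) ` ?F"
    then obtain B' where B': "B' \<in> ?F" and x: "x = Sup (?R ` B')" by blast
    have B'sub: "B' \<subseteq> p_sphere mu p" using B' by (simp add: genus_family_def)
    have "kras_genus B' \<ge> enat ?a" using B' by (simp add: genus_family_def)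
    then have "B' \<noteq> {}" by (rule genus_nonempty[OF _ a1])
    then obtain f0 where f0: "f0 \<in> B'" by blast
    have bdd: "bdd_above (?R ` B')"
    proof (rule bdd_aboveI)
      fix y assume "y \<in> ?R ` B'"
      then obtain f where f: "f \<in> B'" "y = ?R f" by blast
      have fs: "f \<in> p_sphere mu p" using f(1) B'sub by blast
      have "?R f = numer adj sg w kappa p f" by (rule rayleigh_sphere[OF fs])
      then show "y \<le> C" using C fs f(2) by simp
    qed
    have f0s: "f0 \<in> p_sphere mu p" using f0 B'sub by blast
    have "Lb \<le> ?R f0"
      using numer_lower[OF f0s mu wpos, where kappa=kappa and sg=sg] rayleigh_sphere[OF f0s]
      by (simp add: Lb_def)
    also have "\<dots> \<le> Sup (?R ` B')" using f0 bdd by (intro cSup_upper) auto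
    finally show "Lb \<le> x" using x by simp
  qed
  have "var_eigenvalue adj sg w mu kappa p ?a = Inf ((\<lambda>B. Sup (?R ` B)) ` ?F)"
    by (simp add: var_eigenvalue_def)
  also have "\<dots> \<le> Sup (?R ` B)"
    by (rule cInf_lower[OF imageI[OF BF] bddF])
  also have "\<dots> \<le> M"
    using Bne RB by (intro cSup_least) auto
  finally show ?thesis by (simp add: M_def)
qed

end
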